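(* Let $G=(V,E)$ be a nice graph with $V=\{1,\dots,n\}$, and let $K\in\mathbb{N}^E$. The following are equivalent: (1) $K$ is sufficient for $G$; (2) $\langle H_E^{K'},Q_E\rangle\neq 0$ for some $K'\in\mathbb{N}^E_{|E|}$ with $K'\le K$; (3) $\langle F,Q_E\rangle\neq0$ for some $F\in W^K_{E,|E|}$; (4) $\mathrm{per}(C_G(K'))\neq 0$ for some $K'\in\mathbb{N}^E_{|E|}$ with $K'\le K$.
   Context: All graphs are finite and simple; an edge is a $2$-subset $\{i,j\}$ of $V$; $E(i)$ is the set of edges incident to $i$; a graph is nice if it has no edge both of whose endpoints have degree $1$. For a finite set $E$, $\mathbb{N}^E$ is the set of maps $E\to\mathbb{N}$ and $\mathbb{N}^E_m=\{K\in\mathbb{N}^E:\sum_eK(e)=m\}$; $K\le K'$ means $K(e)\le K'(e)$ for all $e$; $K!=\prod_e K(e)!$; $x^K=\prod_e x_e^{K(e)}$. $P_G=\prod_{\{i,j\}\in E,\ i<j}(\sum_{e\in E(i)}x_e-\sum_{e\in E(j)}x_e)$ in variables $x_e$, $e\in E$; $\mathrm{mon}(P)$ is the set of monomials with nonzero coefficient in $P$. $K\in\mathbb{N}^E$ is sufficient for $G$ if there exists $K'\in\mathbb{N}^E_{|E|}$ with $K'\le K$ and $x^{K'}\in\mathrm{mon}(P_G)$. In the polynomial ring $\mathbb{C}[x_1,\dots,x_n]$ (one variable per vertex) define $Q_E=\prod_{\{i,j\}\in E,\ i<j}(x_i-x_j)$ and, for $K\in\mathbb{N}^E$, $H_E^K=\prod_{\{i,j\}\in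 E,\ i<j}(x_i+x_j)^{K(\{i,j\})}$. On homogeneous polynomials of degree $m$ in $x_1,\dots,x_n$ define the inner product $\langle f,g\rangle=\sum_{K\in\mathbb{N}^n_m}K!\,\mathrm{coe}(x^K,f)\overline{\mathrm{coe}(x^K,g)}$, where $\mathrm{coe}(x^K,f)$ is the coefficient of $x^K$ in $f$. $W^K_{E,m}$ is the complex linear span of $\{H_E^{K'}:K'\le K,\ K'\in\mathbb{N}^E_m\}$. $C_G=(c_{ee'})_{e,e'\in E}$ where for $e=\{i,j\}$, $i<j$: $c_{ee'}=1$ if $e'\ne e$ shares the vertex $i$ with $e$, $c_{ee'}=-1$ if $e'\neq e$ shares the vertex $j$ with $e$, and $c_{ee'}=0$ otherwise. For $K'\in\mathbb{N}^E_{|E|}$, $C_G(K')$ is the $|E|\times|E|$ matrix whose columns consist of $K'(e)$ copies of the column of $C_G$ indexed by $e$, for each $e\in E$. $\mathrm{per}$ denotes the permanent. *)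

theory Defs
  imports Complex_Main "HOL-Library.Poly_Mapping" "HOL-Library.FuncSet"
begin

type_synonym ('v, 'c) mpoly = "('v \<Rightarrow>\<^sub>0 nat) \<Rightarrow>\<^sub>0 'c"

definition Var :: "'v \<Rightarrow> ('v, 'c::{zero,one}) mpoly" where
  "Var v = Poly_Mapping.single (Poly_Mapping.single v 1) 1"

definition const_mp :: "'c::zero \<Rightarrow> ('v, 'c) mpoly" where
  "const_mp c = Poly_Mapping.single 0 c"

definition coe :: "('v \<Rightarrow>\<^sub>0 nat) \<Rightarrow> ('v, 'c::zero) mpoly \<Rightarrow> 'c" where
  "coe M f = Poly_Mapping.lookup f M"

definition graph_on :: "nat \<Rightarrow> nat set set \<Rightarrow> bool" where
  "graph_on n E \<longleftrightarrow> (\<forall>e\<in>E. e \<subseteq> {1..n} \<and> card e = 2)"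

definition inc_edges :: "nat set set \<Rightarrow> nat \<Rightarrow> nat set set" where
  "inc_edges E i = {e\<in>E. i \<in> e}"

definition deg :: "nat set set \<Rightarrow> nat \<Rightarrow> nat" where
  "deg E i = card (inc_edges E i)"

definition nice :: "nat set set \<Rightarrow> bool" where
  "nice E \<longleftrightarrow> (\<forall>e\<in>E. \<not> (\<forall>v\<in>e. deg E v = 1))"

definition lo :: "nat set \<Rightarrow> nat" where "lo e = Min e"
definition hi :: "nat set \<Rightarrow> nat" where "hi e = Max e"

definition NE :: "nat set set \<Rightarrow> (nat set \<Rightarrow>\<^sub>0 nat) set" where
  "NE E = {K. Poly_Mapping.keys K \<subseteq> E}"

definition NE_m :: "nat set set \<Rightarrow> nat \<Rightarrow> (nat set \<Rightarrow>\<^sub>0 nat) set" where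
  "NE_m E m = {K \<in> NE E. (\<Sum>e\<in>E. Poly_Mapping.lookup K e) = m}"

definition le_pw :: "('a \<Rightarrow>\<^sub>0 nat) \<Rightarrow> ('a \<Rightarrow>\<^sub>0 nat) \<Rightarrow> bool" where
  "le_pw K K' \<longleftrightarrow> (\<forall>e. Poly_Mapping.lookup K e \<le> Poly_Mapping.lookup K' e)"

definition P_G :: "nat set set \<Rightarrow> (nat set, int) mpoly" where
  "P_G E = (\<Prod>e\<in>E. (\<Sum>e'\<in>inc_edges E (lo e). Var e') - (\<Sum>e'\<in>inc_edges E (hi e). Var e'))"

definition mon :: "('v, 'c::zero) mpoly \<Rightarrow> ('v \<Rightarrow>\<^sub>0 nat) set" where
  "mon P = {M. coe M P \<noteq> 0}"

definition sufficient :: "nat set set \<Rightarrow> (nat set \<Rightarrow>\<^sub>0 nat) \<Rightarrow> bool" where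
  "sufficient E K \<longleftrightarrow> (\<exists>K'\<in>NE_m E (card E). le_pw K' K \<and> K' \<in> mon (P_G E))"

definition Q_E :: "nat set set \<Rightarrow> (nat, complex) mpoly" where
  "Q_E E = (\<Prod>e\<in>E. Var (lo e) - Var (hi e))"

definition H_E :: "nat set set \<Rightarrow> (nat set \<Rightarrow>\<^sub>0 nat) \<Rightarrow> (nat, complex) mpoly" where
  "H_E E K = (\<Prod>e\<in>E. (Var (lo e) + Var (hi e)) ^ Poly_Mapping.lookup K e)"

definition fact_pm :: "('v \<Rightarrow>\<^sub>0 nat) \<Rightarrow> nat" where
  "fact_pm M = (\<Prod>v\<in>Poly_Mapping.keys M. fact (Poly_Mapping.lookup M v))"

text \<open>The inner product on homogeneous polynomials of degree m (the sum over
  N^n_m restricted to monomials where both coefficients may be nonzero).\<close>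
definition inner_m :: "nat \<Rightarrow> (nat, complex) mpoly \<Rightarrow> (nat, complex) mpoly \<Rightarrow> complex" where
  "inner_m m f g = (\<Sum>M\<in>{M\<in>Poly_Mapping.keys f \<inter> Poly_Mapping.keys g. sum (Poly_Mapping.lookup M) (Poly_Mapping.keys M) = m}.
       of_nat (fact_pm M) * coe M f * cnj (coe M g))"

text \<open>W^K_{E,m}: complex linear span of H_E^{K'}, K' \<le> K, K' \<in> N^E_m (as finite linear
  combinations over this finite generating family).\<close>
definition W_E :: "nat set set \<Rightarrow> (nat set \<Rightarrow>\<^sub>0 nat) \<Rightarrow> nat \<Rightarrow> (nat, complex) mpoly set" where
  "W_E E K m = {(\<Sum>K'\<in>{K'\<in>NE_m E m. le_pw K' K}. const_mp (c K') * H_E E K') | c. True}"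

definition C_G :: "nat set set \<Rightarrow> nat set \<Rightarrow> nat set \<Rightarrow> int" where
  "C_G E e e' = (if e' \<noteq> e \<and> lo e \<in> e' then 1
                 else if e' \<noteq> e \<and> hi e \<in> e' then -1 else 0)"

definition permanent :: "'r set \<Rightarrow> 'k set \<Rightarrow> ('r \<Rightarrow> 'k \<Rightarrow> 'a::comm_ring_1) \<Rightarrow> 'a" where
  "permanent R C A = (\<Sum>\<sigma>\<in>{\<sigma>\<in>R \<rightarrow>\<^sub>E C. bij_betw \<sigma> R C}. \<Prod>r\<in>R. A r (\<sigma> r))"

text \<open>C_G(K'): rows indexed by E, columns indexed by pairs (e,k) with k < K'(e),
  i.e. K'(e) copies of column e of C_G.\<close>
definition col_slots :: "nat set set \<Rightarrow> (nat set \<Rightarrow>\<^sub>0 nat) \<Rightarrow> (nat set \<times> nat) set" where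
  "col_slots E K = {(e, k). e \<in> E \<and> k < Poly_Mapping.lookup K e}"

definition C_G_K :: "nat set set \<Rightarrow> nat set \<Rightarrow> nat set \<times> nat \<Rightarrow> int" where
  "C_G_K E r c = C_G E r (fst c)"

definition per_C_G :: "nat set set \<Rightarrow> (nat set \<Rightarrow>\<^sub>0 nat) \<Rightarrow> int" where
  "per_C_G E K = permanent E (col_slots E K) (C_G_K E)"

end

theory Submission
  imports Defs "HOL-Library.FuncSet"
begin


definition cnt :: "'a set \<Rightarrow> ('a \<Rightarrow> 'v) \<Rightarrow> ('v \<Rightarrow>\<^sub>0 nat)" where
  "cnt A f = (\<Sum>a\<in>A. Poly_Mapping.single (f a) 1)"

lemma lookup_cnt: "finite A \<Longrightarrow> Poly_Mapping.lookup (cnt A f) v = card {a\<in>A. f a = v}"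
  unfolding cnt_def by (simp add: lookup_sum lookup_single when_def sum.If_cases Int_def conj_commute)

lemma prod_single_pm:
  fixes c :: "'a \<Rightarrow> 'c::comm_semiring_1" and k :: "'a \<Rightarrow> 'k::comm_monoid_add"
  shows "finite A \<Longrightarrow> (\<Prod>a\<in>A. Poly_Mapping.single (k a) (c a)) = Poly_Mapping.single (\<Sum>a\<in>A. k a) (\<Prod>a\<in>A. c a)"
  by (induction A rule: finite_induct) (auto simp: mult_single)

lemma prod_lin:
  fixes c :: "'a \<Rightarrow> 'v \<Rightarrow> 'c::comm_semiring_1"
  assumes "finite A" "finite V"
  shows "(\<Prod>a\<in>A. \<Sum>v\<in>V. Poly_Mapping.single (Poly_Mapping.single v 1) (c a v))
       = (\<Sum>f\<in>PiE A (\<lambda>_. V). Poly_Mapping.single (cnt A f) (\<Prod>a\<in>A. c a (f a)))"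
  using assms by (simp add: prod_sum_PiE prod_single_pm cnt_def)

lemma lookup_sum_single:
  "finite F \<Longrightarrow> Poly_Mapping.lookup (\<Sum>f\<in>F. Poly_Mapping.single (k f) (w f)) M = (\<Sum>f\<in>{f\<in>F. k f = M}. w f)"
  by (simp add: lookup_sum lookup_single when_def sum.inter_filter)

lemma keys_sum_single:
  "finite F \<Longrightarrow> Poly_Mapping.keys (\<Sum>f\<in>F. Poly_Mapping.single (k f) (w f)) \<subseteq> k ` F"
proof
  fix M assume "finite F" "M \<in> Poly_Mapping.keys (\<Sum>f\<in>F. Poly_Mapping.single (k f) (w f))"
  then have "(\<Sum>f\<in>{f\<in>F. k f = M}. w f) \<noteq> 0" by (simp add: in_keys_iff lookup_sum_single)
  then obtain f where "f \<in> F" "k f = M" by (metis (mono_tags, lifting) empty_Collect_eq sum.empty)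
  then show "M \<in> k ` F" by blast
qed



lemma card_bij_ext:
  assumes "finite A" "finite B"
  shows "card {\<tau>\<in>A \<rightarrow>\<^sub>E B. bij_betw \<tau> A B} = (if card A = card B then fact (card A) else 0)"
  using assms
proof (induction A arbitrary: B rule: finite_induct)
  case empty
  show ?case
  proof (cases "B = {}")
    case True
    then have e: "{\<tau>\<in>{} \<rightarrow>\<^sub>E B. bij_betw \<tau> {} B} = {\<lambda>_. undefined}" by (auto simp: bij_betw_def)
    have "card {\<tau>\<in>{} \<rightarrow>\<^sub>E B. bij_betw \<tau> {} B} = 1" by (simp only: e) simp
    then show ?thesis using True by simp
  next
    case False
    then have "{\<tau>\<in>{} \<rightarrow>\<^sub>E B. bij_betw \<tau> {} B} = {}" by (auto simp: bij_betw_def)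
    then show ?thesis using False empty by simp
  qed
next
  case (insert a A)
  let ?X = "{\<tau>\<in>insert a A \<rightarrow>\<^sub>E B. bij_betw \<tau> (insert a A) B}"
  let ?Y = "Sigma B (\<lambda>b. {\<tau>\<in>A \<rightarrow>\<^sub>E (B - {b}). bij_betw \<tau> A (B - {b})})"
  have bij: "bij_betw (\<lambda>\<tau>. (\<tau> a, \<tau>(a:=undefined))) ?X ?Y"
  proof (rule bij_betw_byWitness[where f'="\<lambda>(b,\<tau>). \<tau>(a:=b)"])
    show "\<forall>x\<in>?X. (\<lambda>(b,\<tau>). \<tau>(a:=b)) (x a, x(a:=undefined)) = x" by auto
    show "\<forall>y\<in>?Y. (\<lambda>\<tau>. (\<tau> a, \<tau>(a:=undefined))) ((\<lambda>(b,\<tau>). \<tau>(a:=b)) y) = y"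
      using insert.hyps by (auto simp: PiE_def extensional_def)
    show "(\<lambda>\<tau>. (\<tau> a, \<tau>(a:=undefined))) ` ?X \<subseteq> ?Y"
    proof (rule image_subsetI)
      fix \<tau> assume "\<tau> \<in> ?X"
      then have t: "\<tau> \<in> insert a A \<rightarrow>\<^sub>E B" "bij_betw \<tau> (insert a A) B" by auto
      have c1: "\<tau> a \<in> B" using t by auto
      have c2: "\<tau>(a:=undefined) \<in> A \<rightarrow>\<^sub>E (B - {\<tau> a})"
        using t insert.hyps by (auto simp: PiE_def extensional_def bij_betw_def inj_on_def)
      have b1: "bij_betw \<tau> A (B - {\<tau> a})"
        using t(2) insert.hyps unfolding bij_betw_def by (auto simp: inj_on_def)
      have "bij_betw (\<tau>(a:=undefined)) A (B - {\<tau> a}) = bij_betw \<tau> A (B - {\<tau> a})"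
        by (rule bij_betw_cong) (use insert.hyps in auto)
      with b1 have c3: "bij_betw (\<tau>(a:=undefined)) A (B - {\<tau> a})" by simp
      from c1 c2 c3 show "(\<tau> a, \<tau>(a:=undefined)) \<in> ?Y" by auto
    qed
    show "(\<lambda>(b,\<tau>). \<tau>(a:=b)) ` ?Y \<subseteq> ?X"
    proof (rule image_subsetI)
      fix p assume "p \<in> ?Y"
      then obtain b \<tau> where p: "p = (b, \<tau>)" and b: "b \<in> B" and t: "\<tau> \<in> A \<rightarrow>\<^sub>E (B - {b})" "bij_betw \<tau> A (B - {b})" by auto
      have d1: "\<tau>(a:=b) \<in> insert a A \<rightarrow>\<^sub>E B" using t b by (auto simp: PiE_def extensional_def)
      have "bij_betw (\<tau>(a:=b)) A (B - {b}) = bij_betw \<tau> A (B - {b})"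
        by (rule bij_betw_cong) (use insert.hyps in auto)
      with t have "bij_betw (\<tau>(a:=b)) A (B - {b})" by simp
      then have "bij_betw (\<tau>(a:=b)) (A \<union> {a}) ((B - {b}) \<union> {b})"
        by (rule bij_betw_combine) auto
      then have "bij_betw (\<tau>(a:=b)) (insert a A) B" using b by (simp add: insert_absorb)
      with d1 show "(\<lambda>(b,\<tau>). \<tau>(a:=b)) p \<in> ?X" by (auto simp: p)
    qed
  qed
  have fin: "finite {\<tau>\<in>A \<rightarrow>\<^sub>E (B - {b}). bij_betw \<tau> A (B - {b})}" for b
    by (rule finite_subset[of _ "A \<rightarrow>\<^sub>E (B - {b})"]) (auto intro: finite_PiE insert.hyps insert.prems)
  have "card ?X = card ?Y" using bij_betw_same_card[OF bij] .
  also have "\<dots> = (\<Sum>b\<in>B. card {\<tau>\<in>A \<rightarrow>\<^sub>E (B - {b}). bij_betw \<tau> A (B - {b})})"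
    using insert.prems fin by (intro card_SigmaI) auto
  also have "\<dots> = (\<Sum>b\<in>B. (if card A = card B - 1 then fact (card A) else 0))"
    using insert.prems by (intro sum.cong refl) (simp add: insert.IH card_Diff_singleton)
  also have "\<dots> = (if card (insert a A) = card B then fact (card (insert a A)) else 0)"
    using insert.hyps insert.prems by (cases "B = {}") (auto simp: card_gt_0_iff fact_reduce[of "card B"])
  finally show ?case .
qed



lemma keys_cnt: "finite A \<Longrightarrow> Poly_Mapping.keys (cnt A f) \<subseteq> f ` A"
  unfolding cnt_def by (rule keys_sum_single)

lemma count_bij:
  assumes fE: "finite E" and fS: "finite S"
  shows "card {\<sigma>\<in>E \<rightarrow>\<^sub>E S. bij_betw \<sigma> E S \<and> (\<forall>e\<in>E. g (\<sigma> e) = h e)}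
       = (if cnt S g = cnt E h then fact_pm (cnt E h) else 0)"
proof -
  define Vs where "Vs = h ` E \<union> g ` S"
  define Af where "Af v = {e\<in>E. h e = v}" for v
  define Bf where "Bf v = {s\<in>S. g s = v}" for v
  let ?X = "{\<sigma>\<in>E \<rightarrow>\<^sub>E S. bij_betw \<sigma> E S \<and> (\<forall>e\<in>E. g (\<sigma> e) = h e)}"
  let ?Y = "PiE Vs (\<lambda>v. {\<tau>\<in>Af v \<rightarrow>\<^sub>E Bf v. bij_betw \<tau> (Af v) (Bf v)})"
  have fVs: "finite Vs" using fE fS by (simp add: Vs_def)
  have bij: "bij_betw (\<lambda>\<sigma>. \<lambda>v\<in>Vs. restrict \<sigma> (Af v)) ?X ?Y"
  proof (rule bij_betw_byWitness[where f'="\<lambda>\<tau>s. \<lambda>e\<in>E. \<tau>s (h e) e"])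
    show "\<forall>\<sigma>\<in>?X. (\<lambda>\<tau>s. \<lambda>e\<in>E. \<tau>s (h e) e) (\<lambda>v\<in>Vs. restrict \<sigma> (Af v)) = \<sigma>"
      by (auto simp: Vs_def Af_def PiE_def extensional_def fun_eq_iff)
    show "\<forall>\<tau>s\<in>?Y. (\<lambda>\<sigma>. \<lambda>v\<in>Vs. restrict \<sigma> (Af v)) (\<lambda>e\<in>E. \<tau>s (h e) e) = \<tau>s"
    proof
      fix \<tau>s assume t: "\<tau>s \<in> ?Y"
      show "(\<lambda>v\<in>Vs. restrict (\<lambda>e\<in>E. \<tau>s (h e) e) (Af v)) = \<tau>s"
      proof
        fix v
        show "(\<lambda>v\<in>Vs. restrict (\<lambda>e\<in>E. \<tau>s (h e) e) (Af v)) v = \<tau>s v"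
        proof (cases "v \<in> Vs")
          case True
          then have ext: "\<tau>s v \<in> extensional (Af v)" using t by (auto simp: PiE_def)
          show ?thesis
          proof
            fix e show "(\<lambda>v\<in>Vs. restrict (\<lambda>e\<in>E. \<tau>s (h e) e) (Af v)) v e = \<tau>s v e"
              using True ext by (cases "e \<in> Af v") (auto simp: Af_def extensional_def)
          qed
        next
          case False
          then show ?thesis using t by (auto simp: PiE_def extensional_def)
        qed
      qed
    qed
    show "(\<lambda>\<sigma>. \<lambda>v\<in>Vs. restrict \<sigma> (Af v)) ` ?X \<subseteq> ?Y"
    proof (rule image_subsetI)
      fix \<sigma> assume "\<sigma> \<in> ?X"
      then have s1: "\<sigma> \<in> E \<rightarrow>\<^sub>E S" and s2: "bij_betw \<sigma> E S" and s3: "\<forall>e\<in>E. g (\<sigma> e) = h e" by auto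
      have "restrict \<sigma> (Af v) \<in> Af v \<rightarrow>\<^sub>E Bf v" for v
        using s1 s3 by (auto simp: Af_def Bf_def)
      moreover have "bij_betw (restrict \<sigma> (Af v)) (Af v) (Bf v)" for v
      proof -
        have "inj_on \<sigma> (Af v)" using s2 by (auto simp: bij_betw_def Af_def intro: inj_on_subset)
        moreover have "\<sigma> ` Af v = Bf v"
        proof
          show "\<sigma> ` Af v \<subseteq> Bf v" using s1 s3 by (auto simp: Af_def Bf_def)
          show "Bf v \<subseteq> \<sigma> ` Af v"
          proof
            fix s assume "s \<in> Bf v"
            then have "s \<in> S" "g s = v" by (auto simp: Bf_def)
            then obtain e where "e \<in> E" "\<sigma> e = s" using s2 by (auto simp: bij_betw_def)
            then show "s \<in> \<sigma> ` Af v" using s3 \<open>g s = v\<close> by (auto simp: Af_def)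
          qed
        qed
        ultimately show ?thesis by (simp add: bij_betw_def)
      qed
      ultimately show "(\<lambda>v\<in>Vs. restrict \<sigma> (Af v)) \<in> ?Y" by auto
    qed
    show "(\<lambda>\<tau>s. \<lambda>e\<in>E. \<tau>s (h e) e) ` ?Y \<subseteq> ?X"
    proof (rule image_subsetI)
      fix \<tau>s assume t: "\<tau>s \<in> ?Y"
      have hE: "h e \<in> Vs" if "e \<in> E" for e using that by (auto simp: Vs_def)
      have t1: "\<tau>s (h e) e \<in> Bf (h e)" if "e \<in> E" for e
        using t hE[OF that] that by (auto simp: Af_def)
      have t2: "bij_betw (\<tau>s v) (Af v) (Bf v)" if "v \<in> Vs" for v using t that by auto
      let ?\<sigma> = "\<lambda>e\<in>E. \<tau>s (h e) e"
      have m: "?\<sigma> \<in> E \<rightarrow>\<^sub>E S" using t1 by (auto simp: Bf_def)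
      have g: "\<forall>e\<in>E. g (?\<sigma> e) = h e" using t1 by (auto simp: Bf_def)
      have inj: "inj_on ?\<sigma> E"
      proof (rule inj_onI)
        fix e1 e2 assume e: "e1 \<in> E" "e2 \<in> E" "?\<sigma> e1 = ?\<sigma> e2"
        then have "h e1 = h e2" using g by metis
        then have "\<tau>s (h e1) e1 = \<tau>s (h e1) e2" using e by simp
        moreover have "e1 \<in> Af (h e1)" "e2 \<in> Af (h e1)" using e \<open>h e1 = h e2\<close> by (auto simp: Af_def)
        ultimately show "e1 = e2" using t2[OF hE[OF e(1)]] by (auto simp: bij_betw_def inj_on_def)
      qed
      have sur: "?\<sigma> ` E = S"
      proof
        show "?\<sigma> ` E \<subseteq> S" using m by auto
        show "S \<subseteq> ?\<sigma> ` E"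
        proof
          fix s assume "s \<in> S"
          then have v: "g s \<in> Vs" "s \<in> Bf (g s)" by (auto simp: Vs_def Bf_def)
          have "s \<in> \<tau>s (g s) ` Af (g s)" using t2[OF v(1)] v(2) by (simp add: bij_betw_def)
          then obtain e where e1: "s = \<tau>s (g s) e" and e2: "e \<in> Af (g s)" by (rule imageE)
          from e2 have "e \<in> E" "h e = g s" by (auto simp: Af_def)
          then have "?\<sigma> e = s" using e1[symmetric] by simp
          then show "s \<in> ?\<sigma> ` E" using \<open>e \<in> E\<close> by (metis image_eqI)
        qed
      qed
      show "?\<sigma> \<in> ?X" using m g inj sur by (auto simp: bij_betw_def)
    qed
  qed
  have "card ?X = card ?Y" using bij_betw_same_card[OF bij] .
  also have "\<dots> = (\<Prod>v\<in>Vs. card {\<tau>\<in>Af v \<rightarrow>\<^sub>E Bf v. bij_betw \<tau> (Af v) (Bf v)})"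
    using fVs by (simp add: card_PiE)
  also have "\<dots> = (\<Prod>v\<in>Vs. if card (Af v) = card (Bf v) then fact (card (Af v)) else 0)"
    using fE fS by (intro prod.cong refl card_bij_ext) (auto simp: Af_def Bf_def)
  also have "\<dots> = (if cnt S g = cnt E h then fact_pm (cnt E h) else 0)"
  proof (cases "cnt S g = cnt E h")
    case True
    have c: "card (Af v) = card (Bf v)" for v
    proof -
      have "Poly_Mapping.lookup (cnt S g) v = Poly_Mapping.lookup (cnt E h) v" using True by simp
      then show ?thesis using fE fS by (simp add: lookup_cnt Af_def Bf_def)
    qed
    have "(\<Prod>v\<in>Vs. if card (Af v) = card (Bf v) then fact (card (Af v)) else 0)
        = (\<Prod>v\<in>Vs. fact (Poly_Mapping.lookup (cnt E h) v))"
      using c fE by (simp add: lookup_cnt Af_def)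
    also have "\<dots> = fact_pm (cnt E h)"
      unfolding fact_pm_def
      using fVs keys_cnt[OF fE, of h]
      by (intro prod.mono_neutral_right) (auto simp: Vs_def in_keys_iff)
    finally show ?thesis using True by simp
  next
    case False
    have "\<exists>v. Poly_Mapping.lookup (cnt S g) v \<noteq> Poly_Mapping.lookup (cnt E h) v"
    proof (rule ccontr)
      assume "\<not> (\<exists>v. Poly_Mapping.lookup (cnt S g) v \<noteq> Poly_Mapping.lookup (cnt E h) v)"
      then have "cnt S g = cnt E h" by (intro poly_mapping_eqI) auto
      with False show False by simp
    qed
    then obtain v where "Poly_Mapping.lookup (cnt S g) v \<noteq> Poly_Mapping.lookup (cnt E h) v" by blast
    then have v: "card (Af v) \<noteq> card (Bf v)" using fE fS by (simp add: lookup_cnt Af_def Bf_def)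
    have "v \<in> Vs"
    proof (rule ccontr)
      assume "v \<notin> Vs"
      then have "Af v = {}" "Bf v = {}" by (auto simp: Vs_def Af_def Bf_def)
      then show False using v by simp
    qed
    then show ?thesis using False v fVs by (auto intro!: prod_zero)
  qed
  finally show ?thesis .
qed



definition pair :: "('v, 'c::comm_semiring_1) mpoly \<Rightarrow> ('v, 'c) mpoly \<Rightarrow> 'c" where
  "pair f g = (\<Sum>M\<in>Poly_Mapping.keys f \<inter> Poly_Mapping.keys g.
      of_nat (fact_pm M) * Poly_Mapping.lookup f M * Poly_Mapping.lookup g M)"

lemma pair_superset:
  assumes "finite T" "Poly_Mapping.keys f \<subseteq> T"
  shows "pair f g = (\<Sum>M\<in>T. of_nat (fact_pm M) * Poly_Mapping.lookup f M * Poly_Mapping.lookup g M)"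
  unfolding pair_def using assms
  by (intro sum.mono_neutral_left) (auto simp: in_keys_iff)

lemma card_filter_sum:
  "finite A \<Longrightarrow> (of_nat (card {x\<in>A. P x}) :: 'c::comm_semiring_1) = (\<Sum>x\<in>A. if P x then 1 else 0)"
  by (simp add: sum.inter_filter[symmetric])

lemma pair_perm:
  fixes a :: "'s \<Rightarrow> 'v \<Rightarrow> 'c::comm_semiring_1" and b :: "'e \<Rightarrow> 'v \<Rightarrow> 'c"
  assumes fS: "finite S" and fE: "finite E" and fV: "finite V"
  shows "pair (\<Prod>s\<in>S. \<Sum>v\<in>V. Poly_Mapping.single (Poly_Mapping.single v 1) (a s v))
              (\<Prod>e\<in>E. \<Sum>v\<in>V. Poly_Mapping.single (Poly_Mapping.single v 1) (b e v))
       = (\<Sum>\<sigma>\<in>{\<sigma>\<in>E \<rightarrow>\<^sub>E S. bij_betw \<sigma> E S}. \<Prod>e\<in>E. \<Sum>v\<in>V. a (\<sigma> e) v * b e v)"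
proof -
  define G where "G = S \<rightarrow>\<^sub>E V"
  define H where "H = E \<rightarrow>\<^sub>E V"
  define Bj where "Bj = {\<sigma>\<in>E \<rightarrow>\<^sub>E S. bij_betw \<sigma> E S}"
  define A where "A g = (\<Prod>s\<in>S. a s (g s))" for g
  define B where "B h = (\<Prod>e\<in>E. b e (h e))" for h
  have fG: "finite G" and fH: "finite H"
    using fS fE fV by (auto simp: G_def H_def intro: finite_PiE)
  have fBj: "finite Bj" unfolding Bj_def
    by (rule finite_subset[of _ "E \<rightarrow>\<^sub>E S"]) (auto intro: finite_PiE fE fS)
  define P1 where "P1 = (\<Sum>g\<in>G. Poly_Mapping.single (cnt S g) (A g))"
  define P2 where "P2 = (\<Sum>h\<in>H. Poly_Mapping.single (cnt E h) (B h))"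
  have e1: "(\<Prod>s\<in>S. \<Sum>v\<in>V. Poly_Mapping.single (Poly_Mapping.single v 1) (a s v)) = P1"
    unfolding P1_def G_def A_def using fS fV by (rule prod_lin)
  have e2: "(\<Prod>e\<in>E. \<Sum>v\<in>V. Poly_Mapping.single (Poly_Mapping.single v 1) (b e v)) = P2"
    unfolding P2_def H_def B_def using fE fV by (rule prod_lin)
  have "pair P1 P2 = (\<Sum>M\<in>cnt S ` G. of_nat (fact_pm M) * Poly_Mapping.lookup P1 M * Poly_Mapping.lookup P2 M)"
    using fG unfolding P1_def by (intro pair_superset keys_sum_single) auto
  also have "\<dots> = (\<Sum>M\<in>cnt S ` G. \<Sum>g\<in>{g\<in>G. cnt S g = M}.
                     of_nat (fact_pm (cnt S g)) * A g * Poly_Mapping.lookup P2 (cnt S g))"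
    unfolding P1_def using fG
    by (intro sum.cong refl) (simp add: lookup_sum_single sum_distrib_left sum_distrib_right)
  also have "\<dots> = (\<Sum>g\<in>G. of_nat (fact_pm (cnt S g)) * A g * Poly_Mapping.lookup P2 (cnt S g))"
    using fG by (rule sum.image_gen[symmetric])
  also have "\<dots> = (\<Sum>g\<in>G. \<Sum>h\<in>H. of_nat (if cnt S g = cnt E h then fact_pm (cnt E h) else 0) * A g * B h)"
  proof (intro sum.cong refl)
    fix g assume "g \<in> G"
    have "Poly_Mapping.lookup P2 (cnt S g) = (\<Sum>h\<in>H. if cnt E h = cnt S g then B h else 0)"
      unfolding P2_def using fH by (simp add: lookup_sum_single sum.inter_filter)
    then show "of_nat (fact_pm (cnt S g)) * A g * Poly_Mapping.lookup P2 (cnt S g)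
        = (\<Sum>h\<in>H. of_nat (if cnt S g = cnt E h then fact_pm (cnt E h) else 0) * A g * B h)"
      by (simp add: sum_distrib_left) (rule sum.cong; simp)
  qed
  also have "\<dots> = (\<Sum>g\<in>G. \<Sum>h\<in>H. \<Sum>\<sigma>\<in>Bj. if (\<forall>e\<in>E. g (\<sigma> e) = h e) then A g * B h else 0)"
  proof (intro sum.cong refl)
    fix g :: "'s \<Rightarrow> 'v" and h :: "'e \<Rightarrow> 'v"
    have "{\<sigma>\<in>E \<rightarrow>\<^sub>E S. bij_betw \<sigma> E S \<and> (\<forall>e\<in>E. g (\<sigma> e) = h e)} = {\<sigma>\<in>Bj. \<forall>e\<in>E. g (\<sigma> e) = h e}"
      by (auto simp: Bj_def)
    then have "(if cnt S g = cnt E h then fact_pm (cnt E h) else 0) = card {\<sigma>\<in>Bj. \<forall>e\<in>E. g (\<sigma> e) = h e}"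
      using count_bij[OF fE fS, of g h] by simp
    then have "(of_nat (if cnt S g = cnt E h then fact_pm (cnt E h) else 0) :: 'c)
        = of_nat (card {\<sigma>\<in>Bj. \<forall>e\<in>E. g (\<sigma> e) = h e})" by (rule arg_cong)
    also have "\<dots> = (\<Sum>\<sigma>\<in>Bj. if (\<forall>e\<in>E. g (\<sigma> e) = h e) then 1 else 0)"
      by (rule card_filter_sum[OF fBj])
    finally have xeq: "(of_nat (if cnt S g = cnt E h then fact_pm (cnt E h) else 0) :: 'c)
        = (\<Sum>\<sigma>\<in>Bj. if (\<forall>e\<in>E. g (\<sigma> e) = h e) then 1 else 0)" .
    have yeq: "(\<Sum>\<sigma>\<in>Bj. if (\<forall>e\<in>E. g (\<sigma> e) = h e) then A g * B h else 0)
        = (\<Sum>\<sigma>\<in>Bj. if (\<forall>e\<in>E. g (\<sigma> e) = h e) then 1 else 0) * (A g * B h)"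
      by (subst sum_distrib_right) (rule sum.cong; simp)
    show "of_nat (if cnt S g = cnt E h then fact_pm (cnt E h) else 0) * A g * B h
        = (\<Sum>\<sigma>\<in>Bj. if (\<forall>e\<in>E. g (\<sigma> e) = h e) then A g * B h else 0)"
      by (simp only: xeq yeq mult.assoc)
  qed
  also have "\<dots> = (\<Sum>\<sigma>\<in>Bj. \<Sum>g\<in>G. \<Sum>h\<in>H. if (\<forall>e\<in>E. g (\<sigma> e) = h e) then A g * B h else 0)"
    by (simp add: sum.swap[of _ H Bj] sum.swap[of _ G Bj])
  also have "\<dots> = (\<Sum>\<sigma>\<in>Bj. \<Prod>e\<in>E. \<Sum>v\<in>V. a (\<sigma> e) v * b e v)"
  proof (intro sum.cong refl)
    fix \<sigma> assume "\<sigma> \<in> Bj"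
    then have sm: "\<sigma> \<in> E \<rightarrow>\<^sub>E S" and sb: "bij_betw \<sigma> E S" by (auto simp: Bj_def)
    have "(\<Sum>h\<in>H. if (\<forall>e\<in>E. g (\<sigma> e) = h e) then A g * B h else 0)
        = (\<Prod>e\<in>E. a (\<sigma> e) (g (\<sigma> e)) * b e (g (\<sigma> e)))" if g: "g \<in> G" for g
    proof -
      let ?k = "restrict (\<lambda>e. g (\<sigma> e)) E"
      have kH: "?k \<in> H" using g sm by (auto simp: G_def H_def)
      have "(\<Sum>h\<in>H. if (\<forall>e\<in>E. g (\<sigma> e) = h e) then A g * B h else 0)
          = (\<Sum>h\<in>H. if h = ?k then A g * B h else 0)"
        by (intro sum.cong refl) (auto simp: H_def PiE_def extensional_def fun_eq_iff)
      also have "\<dots> = A g * B ?k" using fH kH by (simp add: sum.delta')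
      finally have sk: "(\<Sum>h\<in>H. if (\<forall>e\<in>E. g (\<sigma> e) = h e) then A g * B h else 0) = A g * B ?k" .
      have ag: "A g = (\<Prod>e\<in>E. a (\<sigma> e) (g (\<sigma> e)))"
        unfolding A_def using prod.reindex_bij_betw[OF sb, of "\<lambda>s. a s (g s)"] by simp
      have bk: "B ?k = (\<Prod>e\<in>E. b e (g (\<sigma> e)))" unfolding B_def by simp
      show ?thesis unfolding sk unfolding ag bk by (simp add: prod.distrib)
    qed
    then have "(\<Sum>g\<in>G. \<Sum>h\<in>H. if (\<forall>e\<in>E. g (\<sigma> e) = h e) then A g * B h else 0)
        = (\<Sum>g\<in>G. \<Prod>e\<in>E. a (\<sigma> e) (g (\<sigma> e)) * b e (g (\<sigma> e)))" by simp
    also have "\<dots> = (\<Sum>k\<in>H. \<Prod>e\<in>E. a (\<sigma> e) (k e) * b e (k e))"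
    proof (rule sum.reindex_bij_witness[where j="\<lambda>g. restrict (\<lambda>e. g (\<sigma> e)) E"
          and i="\<lambda>k. restrict (\<lambda>s. k (inv_into E \<sigma> s)) S"])
      fix g assume g: "g \<in> G"
      show "restrict (\<lambda>s. restrict (\<lambda>e. g (\<sigma> e)) E (inv_into E \<sigma> s)) S = g"
      proof
        fix s show "restrict (\<lambda>s. restrict (\<lambda>e. g (\<sigma> e)) E (inv_into E \<sigma> s)) S s = g s"
          using g sb by (cases "s \<in> S") (auto simp: G_def bij_betw_def inv_into_into f_inv_into_f PiE_def extensional_def)
      qed
      show "restrict (\<lambda>e. g (\<sigma> e)) E \<in> H" using g sm by (auto simp: G_def H_def)
      show "(\<Prod>e\<in>E. a (\<sigma> e) (restrict (\<lambda>e. g (\<sigma> e)) E e) * b e (restrict (\<lambda>e. g (\<sigma> e)) E e))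
          = (\<Prod>e\<in>E. a (\<sigma> e) (g (\<sigma> e)) * b e (g (\<sigma> e)))" by simp
    next
      fix k assume k: "k \<in> H"
      show "restrict (\<lambda>e. restrict (\<lambda>s. k (inv_into E \<sigma> s)) S (\<sigma> e)) E = k"
      proof
        fix e show "restrict (\<lambda>e. restrict (\<lambda>s. k (inv_into E \<sigma> s)) S (\<sigma> e)) E e = k e"
          using k sb sm by (cases "e \<in> E") (auto simp: H_def bij_betw_def inv_into_f_f PiE_def extensional_def)
      qed
      show "restrict (\<lambda>s. k (inv_into E \<sigma> s)) S \<in> G"
        using k sb by (auto simp: G_def H_def bij_betw_def inv_into_into)
    qed
    also have "\<dots> = (\<Prod>e\<in>E. \<Sum>v\<in>V. a (\<sigma> e) v * b e v)"
      unfolding H_def using fE fV by (rule prod_sum_PiE[symmetric])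
    finally show "(\<Sum>g\<in>G. \<Sum>h\<in>H. if (\<forall>e\<in>E. g (\<sigma> e) = h e) then A g * B h else 0)
        = (\<Prod>e\<in>E. \<Sum>v\<in>V. a (\<sigma> e) v * b e v)" .
  qed
  finally show ?thesis using e1 e2 by (simp add: Bj_def)
qed



lemma graph_finite: "graph_on n E \<Longrightarrow> finite E"
  unfolding graph_on_def by (rule finite_subset[of _ "Pow {1..n}"]) auto

lemma edge_facts:
  assumes "graph_on n E" "e \<in> E"
  shows "e = {lo e, hi e}" "lo e \<noteq> hi e" "lo e \<in> {1..n}" "hi e \<in> {1..n}" "lo e \<in> e" "hi e \<in> e"
proof -
  have c: "card e = 2" and sub: "e \<subseteq> {1..n}" using assms by (auto simp: graph_on_def)
  then obtain x y where xy: "x \<noteq> y" "e = {x, y}" by (auto simp: card_2_iff)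
  show "e = {lo e, hi e}" "lo e \<noteq> hi e" "lo e \<in> e" "hi e \<in> e"
    using xy by (auto simp: lo_def hi_def min_def max_def)
  then show "lo e \<in> {1..n}" "hi e \<in> {1..n}" using sub by auto
qed

lemma C_G_alt:
  assumes "graph_on n E" "e \<in> E" "v \<in> E"
  shows "C_G E e v = (if lo e \<in> v then 1 else 0) - (if hi e \<in> v then 1 else 0)"
proof (cases "v = e")
  case True then show ?thesis using edge_facts[OF assms(1,2)] by (simp add: C_G_def)
next
  case False
  have "\<not> (lo e \<in> v \<and> hi e \<in> v)"
  proof
    assume "lo e \<in> v \<and> hi e \<in> v"
    then have "e \<subseteq> v" using edge_facts[OF assms(1,2)] by (metis empty_subsetI insert_subset)
    moreover have "card v = 2" "card e = 2" using assms by (auto simp: graph_on_def)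
    ultimately have "e = v" by (metis card.infinite card_subset_eq zero_neq_numeral)
    with False show False by simp
  qed
  then show ?thesis using False by (auto simp: C_G_def)
qed

lemma sum_Var_inc:
  assumes "finite E"
  shows "(\<Sum>e'\<in>inc_edges E i. (Var e' :: (nat set, 'c::comm_ring_1) mpoly))
      = (\<Sum>v\<in>E. Poly_Mapping.single (Poly_Mapping.single v 1) (if i \<in> v then 1 else 0))"
proof -
  have "(\<Sum>v\<in>E. Poly_Mapping.single (Poly_Mapping.single v 1) (if i \<in> v then 1 else 0))
      = (\<Sum>v\<in>E. if i \<in> v then Poly_Mapping.single (Poly_Mapping.single v 1) (1::'c) else 0)"
    by (rule sum.cong) auto
  also have "\<dots> = (\<Sum>v\<in>{v\<in>E. i \<in> v}. Poly_Mapping.single (Poly_Mapping.single v 1) 1)"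
    using assms by (simp add: sum.inter_filter)
  finally show ?thesis unfolding inc_edges_def Var_def by (rule sym)
qed

lemma PG_form:
  assumes g: "graph_on n E"
  shows "P_G E = (\<Prod>e\<in>E. \<Sum>v\<in>E. Poly_Mapping.single (Poly_Mapping.single v 1) (C_G E e v))"
  unfolding P_G_def
proof (rule prod.cong[OF refl])
  fix e assume e: "e \<in> E"
  have fE: "finite E" using graph_finite[OF g] .
  show "(\<Sum>e'\<in>inc_edges E (lo e). Var e') - (\<Sum>e'\<in>inc_edges E (hi e). Var e')
      = (\<Sum>v\<in>E. Poly_Mapping.single (Poly_Mapping.single v 1) (C_G E e v))"
    unfolding sum_Var_inc[OF fE] sum_subtractf[symmetric] single_diff[symmetric]
    by (rule sum.cong[OF refl]) (simp add: C_G_alt[OF g e])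
qed

lemma slots_Sigma: "col_slots E K = Sigma E (\<lambda>e. {..<Poly_Mapping.lookup K e})"
  by (auto simp: col_slots_def)

lemma finite_slots: "finite E \<Longrightarrow> finite (col_slots E K)"
  by (simp add: slots_Sigma)

lemma cnt_slots:
  assumes fE: "finite E" and K: "K \<in> NE E"
  shows "cnt (col_slots E K) fst = K"
proof (rule poly_mapping_eqI)
  fix e
  have "{s\<in>col_slots E K. fst s = e} = (if e \<in> E then {e} \<times> {..<Poly_Mapping.lookup K e} else {})"
    by (auto simp: col_slots_def)
  moreover have "e \<notin> E \<Longrightarrow> Poly_Mapping.lookup K e = 0"
    using K by (auto simp: NE_def in_keys_iff)
  ultimately show "Poly_Mapping.lookup (cnt (col_slots E K) fst) e = Poly_Mapping.lookup K e"
    using fE by (simp add: lookup_cnt finite_slots card_cartesian_product)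
qed

lemma monomial_form:
  fixes K :: "'a \<Rightarrow>\<^sub>0 nat"
  assumes fS: "finite S" and fV: "finite V" and inV: "\<And>s. s \<in> S \<Longrightarrow> f s \<in> V"
  shows "(\<Prod>s\<in>S. \<Sum>v\<in>V. Poly_Mapping.single (Poly_Mapping.single v 1) (if v = f s then 1 else 0))
       = (Poly_Mapping.single (cnt S f) (1::'c::comm_semiring_1))"
proof -
  have "(\<Prod>s\<in>S. \<Sum>v\<in>V. Poly_Mapping.single (Poly_Mapping.single v 1) (if v = f s then 1 else (0::'c)))
      = (\<Prod>s\<in>S. Poly_Mapping.single (Poly_Mapping.single (f s) 1) 1)"
  proof (rule prod.cong[OF refl])
    fix s assume "s \<in> S"
    have "(\<Sum>v\<in>V. Poly_Mapping.single (Poly_Mapping.single v 1) (if v = f s then 1 else (0::'c)))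
        = (\<Sum>v\<in>V. if v = f s then Poly_Mapping.single (Poly_Mapping.single v 1) 1 else 0)"
      by (rule sum.cong) auto
    also have "\<dots> = Poly_Mapping.single (Poly_Mapping.single (f s) 1) 1"
      using fV inV[OF \<open>s \<in> S\<close>] by (simp add: sum.delta')
    finally show "(\<Sum>v\<in>V. Poly_Mapping.single (Poly_Mapping.single v 1) (if v = f s then 1 else (0::'c)))
        = Poly_Mapping.single (Poly_Mapping.single (f s) 1) 1" .
  qed
  also have "\<dots> = Poly_Mapping.single (cnt S f) 1"
    unfolding cnt_def using fS by (simp add: prod_single_pm)
  finally show ?thesis .
qed

lemma pair_single:
  "pair (Poly_Mapping.single M 1) g = of_nat (fact_pm M) * Poly_Mapping.lookup g M"
proof (cases "M \<in> Poly_Mapping.keys g")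
  case True
  then have "Poly_Mapping.keys (Poly_Mapping.single M (1::'a)) \<inter> Poly_Mapping.keys g = {M}" by simp
  then show ?thesis by (simp add: pair_def)
next
  case False
  then have "Poly_Mapping.keys (Poly_Mapping.single M (1::'a)) \<inter> Poly_Mapping.keys g = {}" by simp
  then show ?thesis using False by (simp add: pair_def in_keys_iff)
qed

lemma fact_pm_pos: "fact_pm M > 0"
  unfolding fact_pm_def by (simp add: prod_pos)

lemma sum_delta_mult:
  fixes f :: "'a \<Rightarrow> 'c::semiring_1"
  assumes "finite A" "x \<in> A"
  shows "(\<Sum>v\<in>A. (if v = x then 1 else 0) * f v) = f x"
proof -
  have "(\<Sum>v\<in>A. (if v = x then 1 else 0) * f v) = (\<Sum>v\<in>A. if v = x then f v else 0)"
    by (rule sum.cong) auto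
  then show ?thesis using assms by (simp add: sum.delta')
qed

lemma coe_PG_per:
  assumes g: "graph_on n E" and K: "K \<in> NE E"
  shows "int (fact_pm K) * coe K (P_G E) = per_C_G E K"
proof -
  have fE: "finite E" using graph_finite[OF g] .
  let ?S = "col_slots E K"
  have fS: "finite ?S" using fE by (rule finite_slots)
  have fstS: "s \<in> ?S \<Longrightarrow> fst s \<in> E" for s by (auto simp: col_slots_def)
  have "Poly_Mapping.single K (1::int)
      = (\<Prod>s\<in>?S. \<Sum>v\<in>E. Poly_Mapping.single (Poly_Mapping.single v 1) (if v = fst s then 1 else 0))"
    by (subst monomial_form[OF fS fE]) (auto simp: fstS cnt_slots[OF fE K])
  then have "int (fact_pm K) * coe K (P_G E) = pair (\<Prod>s\<in>?S. \<Sum>v\<in>E. Poly_Mapping.single (Poly_Mapping.single v 1) (if v = fst s then 1 else 0)) (P_G E)"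
    unfolding coe_def by (metis pair_single)
  also have "\<dots> = (\<Sum>\<sigma>\<in>{\<sigma>\<in>E \<rightarrow>\<^sub>E ?S. bij_betw \<sigma> E ?S}. \<Prod>e\<in>E. \<Sum>v\<in>E. (if v = fst (\<sigma> e) then 1 else 0) * C_G E e v)"
    unfolding PG_form[OF g] by (rule pair_perm[OF fS fE fE])
  also have "\<dots> = (\<Sum>\<sigma>\<in>{\<sigma>\<in>E \<rightarrow>\<^sub>E ?S. bij_betw \<sigma> E ?S}. \<Prod>e\<in>E. C_G_K E e (\<sigma> e))"
  proof (intro sum.cong refl prod.cong)
    fix \<sigma> e assume sm: "\<sigma> \<in> {\<sigma>\<in>E \<rightarrow>\<^sub>E ?S. bij_betw \<sigma> E ?S}" "e \<in> E"
    have "\<sigma> \<in> E \<rightarrow>\<^sub>E ?S" using sm(1) by simp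
    then have "\<sigma> e \<in> ?S" using sm(2) by (rule PiE_mem)
    then have "fst (\<sigma> e) \<in> E" by (rule fstS)
    then show "(\<Sum>v\<in>E. (if v = fst (\<sigma> e) then 1 else 0) * C_G E e v) = C_G_K E e (\<sigma> e)"
      using fE by (simp add: C_G_K_def sum_delta_mult)
  qed
  also have "\<dots> = per_C_G E K" by (simp add: per_C_G_def permanent_def)
  finally show ?thesis .
qed



lemma sum_single_delta:
  assumes "finite V" "x \<in> V"
  shows "(\<Sum>v\<in>V. Poly_Mapping.single (Poly_Mapping.single v 1) (if v = x then 1 else 0))
       = Poly_Mapping.single (Poly_Mapping.single x 1) (1::'c::semiring_1)"
proof -
  have "(\<Sum>v\<in>V. Poly_Mapping.single (Poly_Mapping.single v 1) (if v = x then 1 else (0::'c)))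
      = (\<Sum>v\<in>V. if v = x then Poly_Mapping.single (Poly_Mapping.single v 1) 1 else 0)"
    by (rule sum.cong) auto
  then show ?thesis using assms by (simp add: sum.delta')
qed

lemma H_form:
  assumes g: "graph_on n E"
  shows "H_E E K = (\<Prod>s\<in>col_slots E K. \<Sum>v\<in>{1..n}.
            Poly_Mapping.single (Poly_Mapping.single v 1) (if v \<in> fst s then 1 else 0))"
proof -
  have fE: "finite E" using graph_finite[OF g] .
  define X where "X e = (\<Sum>v\<in>{1..n}. Poly_Mapping.single (Poly_Mapping.single v (1::nat)) (if v \<in> e then 1 else (0::complex)))" for e
  have X: "X e = Var (lo e) + Var (hi e)" if e: "e \<in> E" for e
  proof -
    have "X e = (\<Sum>v\<in>{1..n}. if v \<in> e then Poly_Mapping.single (Poly_Mapping.single v (1::nat)) (1::complex) else 0)"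
      unfolding X_def by (rule sum.cong) auto
    also have "\<dots> = (\<Sum>v\<in>{v\<in>{1..n}. v \<in> e}. Poly_Mapping.single (Poly_Mapping.single v (1::nat)) 1)"
      by (rule sum.inter_filter[symmetric]) simp
    also have "{v\<in>{1..n}. v \<in> e} = {lo e, hi e}"
    proof -
      have "e \<subseteq> {1..n}" using g e unfolding graph_on_def by blast
      then have "{v\<in>{1..n}. v \<in> e} = e" by blast
      also have "e = {lo e, hi e}" by (rule edge_facts(1)[OF g e])
      finally show ?thesis .
    qed
    finally show ?thesis using edge_facts(2)[OF g e] by (simp add: Var_def)
  qed
  have "H_E E K = (\<Prod>e\<in>E. \<Prod>k\<in>{..<Poly_Mapping.lookup K e}. X e)"
    unfolding H_E_def by (rule prod.cong[OF refl]) (simp add: X)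
  also have "\<dots> = (\<Prod>s\<in>Sigma E (\<lambda>e. {..<Poly_Mapping.lookup K e}). X (fst s))"
    using fE by (subst prod.Sigma) (auto simp: case_prod_beta)
  finally show ?thesis by (simp add: slots_Sigma X_def)
qed

definition bQ :: "nat set \<Rightarrow> nat \<Rightarrow> complex" where
  "bQ e v = (if v = lo e then 1 else 0) - (if v = hi e then 1 else 0)"

lemma Q_form:
  assumes g: "graph_on n E"
  shows "Q_E E = (\<Prod>e\<in>E. \<Sum>v\<in>{1..n}. Poly_Mapping.single (Poly_Mapping.single v 1) (bQ e v))"
  unfolding Q_E_def
proof (rule prod.cong[OF refl])
  fix e assume e: "e \<in> E"
  have l: "lo e \<in> {1..n}" "hi e \<in> {1..n}" using edge_facts[OF g e] by auto
  have "(\<Sum>v\<in>{1..n}. Poly_Mapping.single (Poly_Mapping.single v 1) (bQ e v))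
     = (\<Sum>v\<in>{1..n}. Poly_Mapping.single (Poly_Mapping.single v 1) (if v = lo e then 1 else 0))
     - (\<Sum>v\<in>{1..n}. Poly_Mapping.single (Poly_Mapping.single v 1) (if v = hi e then 1 else 0))"
    unfolding sum_subtractf[symmetric] by (rule sum.cong[OF refl]) (simp add: bQ_def single_diff)
  also have "\<dots> = Var (lo e) - Var (hi e)"
    unfolding Var_def sum_single_delta[OF finite_atLeastAtMost l(1)] sum_single_delta[OF finite_atLeastAtMost l(2)] ..
  finally show "Var (lo e) - Var (hi e) = (\<Sum>v\<in>{1..n}. Poly_Mapping.single (Poly_Mapping.single v 1) (bQ e v))" by simp
qed

lemma deg_cnt:
  assumes "finite A"
  shows "sum (Poly_Mapping.lookup (cnt A f)) (Poly_Mapping.keys (cnt A f)) = card A"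
proof -
  have "sum (Poly_Mapping.lookup (cnt A f)) (Poly_Mapping.keys (cnt A f))
      = sum (Poly_Mapping.lookup (cnt A f)) (f ` A)"
    using assms keys_cnt[OF assms, of f] by (intro sum.mono_neutral_left) (auto simp: not_in_keys_iff_lookup_eq_zero)
  also have "\<dots> = (\<Sum>v\<in>f ` A. card {a\<in>A. f a = v})" using assms by (simp add: lookup_cnt)
  also have "\<dots> = (\<Sum>a\<in>A. (1::nat))"
    using assms by (subst sum.image_gen[of A "\<lambda>_. (1::nat)" f]) auto
  finally show ?thesis by simp
qed

lemma inner_eq_pair:
  assumes "\<And>M. M \<in> Poly_Mapping.keys g \<Longrightarrow> sum (Poly_Mapping.lookup M) (Poly_Mapping.keys M) = m"
      and "\<And>M. M \<in> Poly_Mapping.keys g \<Longrightarrow> cnj (Poly_Mapping.lookup g M) = Poly_Mapping.lookup g M"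
  shows "inner_m m f g = pair f g"
proof -
  have "{M\<in>Poly_Mapping.keys f \<inter> Poly_Mapping.keys g. sum (Poly_Mapping.lookup M) (Poly_Mapping.keys M) = m}
      = Poly_Mapping.keys f \<inter> Poly_Mapping.keys g" using assms(1) by auto
  then show ?thesis unfolding inner_m_def pair_def coe_def
    using assms(2) by (intro sum.cong) auto
qed

lemma Q_props:
  assumes g: "graph_on n E" and M: "M \<in> Poly_Mapping.keys (Q_E E)"
  shows "sum (Poly_Mapping.lookup M) (Poly_Mapping.keys M) = card E"
    and "cnj (Poly_Mapping.lookup (Q_E E) M) = Poly_Mapping.lookup (Q_E E) M"
proof -
  have fE: "finite E" using graph_finite[OF g] .
  let ?H = "E \<rightarrow>\<^sub>E {1..n}"
  have fH: "finite ?H" using fE by (simp add: finite_PiE)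
  have Q: "Q_E E = (\<Sum>h\<in>?H. Poly_Mapping.single (cnt E h) (\<Prod>e\<in>E. bQ e (h e)))"
    unfolding Q_form[OF g] by (rule prod_lin[OF fE]) simp
  have "M \<in> cnt E ` ?H" using M keys_sum_single[OF fH, of "cnt E" "\<lambda>h. \<Prod>e\<in>E. bQ e (h e)"] Q by auto
  then obtain h where "M = cnt E h" by auto
  then show "sum (Poly_Mapping.lookup M) (Poly_Mapping.keys M) = card E" using deg_cnt[OF fE] by simp
  have cb: "cnj (bQ e v) = bQ e v" for e v by (simp add: bQ_def)
  show "cnj (Poly_Mapping.lookup (Q_E E) M) = Poly_Mapping.lookup (Q_E E) M"
    unfolding Q using fH by (simp add: lookup_sum_single cb)
qed

lemma inner_H_per:
  assumes g: "graph_on n E" and K: "K \<in> NE E"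
  shows "inner_m (card E) (H_E E K) (Q_E E) = of_int (per_C_G E K)"
proof -
  have fE: "finite E" using graph_finite[OF g] .
  let ?S = "col_slots E K"
  have fS: "finite ?S" using fE by (rule finite_slots)
  have fstS: "s \<in> ?S \<Longrightarrow> fst s \<in> E" for s by (auto simp: col_slots_def)
  have "inner_m (card E) (H_E E K) (Q_E E) = pair (H_E E K) (Q_E E)"
    by (rule inner_eq_pair) (use Q_props[OF g] in auto)
  also have "\<dots> = (\<Sum>\<sigma>\<in>{\<sigma>\<in>E \<rightarrow>\<^sub>E ?S. bij_betw \<sigma> E ?S}. \<Prod>e\<in>E. \<Sum>v\<in>{1..n}. (if v \<in> fst (\<sigma> e) then 1 else 0) * bQ e v)"
    unfolding H_form[OF g] Q_form[OF g] by (rule pair_perm[OF fS fE]) simp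
  also have "\<dots> = (\<Sum>\<sigma>\<in>{\<sigma>\<in>E \<rightarrow>\<^sub>E ?S. bij_betw \<sigma> E ?S}. \<Prod>e\<in>E. of_int (C_G_K E e (\<sigma> e)))"
  proof (intro sum.cong refl prod.cong)
    fix \<sigma> e assume sm: "\<sigma> \<in> {\<sigma>\<in>E \<rightarrow>\<^sub>E ?S. bij_betw \<sigma> E ?S}" and e: "e \<in> E"
    have "\<sigma> \<in> E \<rightarrow>\<^sub>E ?S" using sm by simp
    then have "\<sigma> e \<in> ?S" using e by (rule PiE_mem)
    then have f: "fst (\<sigma> e) \<in> E" by (rule fstS)
    have l: "lo e \<in> {1..n}" "hi e \<in> {1..n}" using edge_facts[OF g e] by auto
    have "(\<Sum>v\<in>{1..n}. (if v \<in> fst (\<sigma> e) then 1 else 0) * bQ e v)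
       = (\<Sum>v\<in>{1..n}. (if v = lo e then 1 else 0) * (if v \<in> fst (\<sigma> e) then 1 else (0::complex)))
       - (\<Sum>v\<in>{1..n}. (if v = hi e then 1 else 0) * (if v \<in> fst (\<sigma> e) then 1 else (0::complex)))"
      unfolding sum_subtractf[symmetric] by (rule sum.cong[OF refl]) (simp add: bQ_def)
    also have "\<dots> = (if lo e \<in> fst (\<sigma> e) then 1 else 0) - (if hi e \<in> fst (\<sigma> e) then 1 else 0)"
      using l by (simp add: sum_delta_mult)
    also have "\<dots> = of_int (C_G_K E e (\<sigma> e))"
      unfolding C_G_K_def C_G_alt[OF g e f] by simp
    finally show "(\<Sum>v\<in>{1..n}. (if v \<in> fst (\<sigma> e) then 1 else 0) * bQ e v) = of_int (C_G_K E e (\<sigma> e))" .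
  qed
  also have "\<dots> = of_int (per_C_G E K)" by (simp add: per_C_G_def permanent_def)
  finally show ?thesis .
qed



lemma lookup_const_mult: "Poly_Mapping.lookup (const_mp c * f) M = c * Poly_Mapping.lookup f M"
  unfolding const_mp_def mult_map_scale_conv_mult[symmetric]
  by (simp add: map.rep_eq when_def)

lemma inner_alt:
  "inner_m m f g = (\<Sum>M\<in>{M\<in>Poly_Mapping.keys g. sum (Poly_Mapping.lookup M) (Poly_Mapping.keys M) = m}.
      of_nat (fact_pm M) * Poly_Mapping.lookup f M * cnj (Poly_Mapping.lookup g M))"
  unfolding inner_m_def coe_def
  by (intro sum.mono_neutral_left) (auto simp: in_keys_iff)

lemma inner_lin:
  "inner_m m (\<Sum>K\<in>T. const_mp (c K) * H K) g = (\<Sum>K\<in>T. c K * inner_m m (H K) g)"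
  unfolding inner_alt
  by (simp add: lookup_sum lookup_const_mult sum_distrib_left sum_distrib_right mult.assoc mult.left_commute
      sum.swap[of _ T])

lemma finite_NE_m:
  assumes fE: "finite E"
  shows "finite (NE_m E m)"
proof -
  have inj: "inj_on (\<lambda>K. restrict (Poly_Mapping.lookup K) E) (NE_m E m)"
  proof (rule inj_onI)
    fix K1 K2 assume K: "K1 \<in> NE_m E m" "K2 \<in> NE_m E m"
      and eq: "restrict (Poly_Mapping.lookup K1) E = restrict (Poly_Mapping.lookup K2) E"
    show "K1 = K2"
    proof (rule poly_mapping_eqI)
      fix e show "Poly_Mapping.lookup K1 e = Poly_Mapping.lookup K2 e"
      proof (cases "e \<in> E")
        case True then show ?thesis using fun_cong[OF eq, of e] by simp
      next
        case False
        have "Poly_Mapping.keys K1 \<subseteq> E" "Poly_Mapping.keys K2 \<subseteq> E" using K by (auto simp: NE_m_def NE_def)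
        then have "e \<notin> Poly_Mapping.keys K1" "e \<notin> Poly_Mapping.keys K2" using False by auto
        then show ?thesis by (simp add: not_in_keys_iff_lookup_eq_zero)
      qed
    qed
  qed
  have "(\<lambda>K. restrict (Poly_Mapping.lookup K) E) ` NE_m E m \<subseteq> E \<rightarrow>\<^sub>E {..m}"
  proof clarify
    fix K assume K: "K \<in> NE_m E m"
    have "Poly_Mapping.lookup K e \<le> m" if "e \<in> E" for e
    proof -
      have "Poly_Mapping.lookup K e \<le> (\<Sum>e\<in>E. Poly_Mapping.lookup K e)"
        using fE that by (intro member_le_sum) auto
      then show ?thesis using K by (simp add: NE_m_def)
    qed
    then show "restrict (Poly_Mapping.lookup K) E \<in> E \<rightarrow>\<^sub>E {..m}" by auto
  qed
  moreover have "finite (E \<rightarrow>\<^sub>E {..m})" using fE by (simp add: finite_PiE)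
  ultimately show ?thesis using inj by (metis finite_imageD finite_subset)
qed

theorem lemma2p1:
  fixes n :: nat and E :: "nat set set" and K :: "nat set \<Rightarrow>\<^sub>0 nat"
  assumes "graph_on n E" and "nice E" and "K \<in> NE E"
  shows "(sufficient E K
          \<longleftrightarrow> (\<exists>K'\<in>NE_m E (card E). le_pw K' K \<and> inner_m (card E) (H_E E K') (Q_E E) \<noteq> 0))
       \<and> (sufficient E K
          \<longleftrightarrow> (\<exists>F\<in>W_E E K (card E). inner_m (card E) F (Q_E E) \<noteq> 0))
       \<and> (sufficient E K
          \<longleftrightarrow> (\<exists>K'\<in>NE_m E (card E). le_pw K' K \<and> per_C_G E K' \<noteq> 0))"
proof -
  note g = assms(1)
  have fE: "finite E" using graph_finite[OF g] .
  let ?N = "NE_m E (card E)"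
  let ?T = "{K'\<in>?N. le_pw K' K}"
  have NE: "K' \<in> ?N \<Longrightarrow> K' \<in> NE E" for K' by (simp add: NE_m_def)
  have k1: "coe K' (P_G E) \<noteq> 0 \<longleftrightarrow> per_C_G E K' \<noteq> 0" if "K' \<in> ?N" for K'
    using coe_PG_per[OF g NE[OF that]] fact_pm_pos[of K'] by (metis mult_eq_0_iff of_nat_eq_0_iff not_less0 zero_less_iff_neq_zero)
  have k2: "inner_m (card E) (H_E E K') (Q_E E) \<noteq> 0 \<longleftrightarrow> per_C_G E K' \<noteq> 0" if "K' \<in> ?N" for K'
    using inner_H_per[OF g NE[OF that]] by simp
  have s1: "sufficient E K \<longleftrightarrow> (\<exists>K'\<in>?N. le_pw K' K \<and> per_C_G E K' \<noteq> 0)"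
    unfolding sufficient_def mon_def using k1 by auto
  have s2: "sufficient E K \<longleftrightarrow> (\<exists>K'\<in>?N. le_pw K' K \<and> inner_m (card E) (H_E E K') (Q_E E) \<noteq> 0)"
    unfolding s1 using k2 by auto
  have fT: "finite ?T" using finite_NE_m[OF fE] by simp
  have s3: "(\<exists>K'\<in>?N. le_pw K' K \<and> inner_m (card E) (H_E E K') (Q_E E) \<noteq> 0)
      \<longleftrightarrow> (\<exists>F\<in>W_E E K (card E). inner_m (card E) F (Q_E E) \<noteq> 0)"
  proof
    assume "\<exists>K'\<in>?N. le_pw K' K \<and> inner_m (card E) (H_E E K') (Q_E E) \<noteq> 0"
    then obtain K0 where K0: "K0 \<in> ?T" and nz: "inner_m (card E) (H_E E K0) (Q_E E) \<noteq> 0" by auto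
    define c where "c K' = (if K' = K0 then 1 else (0::complex))" for K'
    have "(\<Sum>K'\<in>?T. const_mp (c K') * H_E E K') = (\<Sum>K'\<in>?T. if K' = K0 then H_E E K' else 0)"
      by (rule sum.cong) (auto simp: c_def const_mp_def)
    also have "\<dots> = H_E E K0" using fT K0 by (simp add: sum.delta')
    finally have "H_E E K0 \<in> W_E E K (card E)" unfolding W_E_def by (metis (mono_tags, lifting) mem_Collect_eq)
    then show "\<exists>F\<in>W_E E K (card E). inner_m (card E) F (Q_E E) \<noteq> 0" using nz by blast
  next
    assume "\<exists>F\<in>W_E E K (card E). inner_m (card E) F (Q_E E) \<noteq> 0"
    then obtain c where nz: "inner_m (card E) (\<Sum>K'\<in>?T. const_mp (c K') * H_E E K') (Q_E E) \<noteq> 0"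
      unfolding W_E_def by auto
    then have "(\<Sum>K'\<in>?T. c K' * inner_m (card E) (H_E E K') (Q_E E)) \<noteq> 0" by (simp add: inner_lin)
    then obtain K' where "K' \<in> ?T" "c K' * inner_m (card E) (H_E E K') (Q_E E) \<noteq> 0"
      by (meson sum.neutral)
    then show "\<exists>K'\<in>?N. le_pw K' K \<and> inner_m (card E) (H_E E K') (Q_E E) \<noteq> 0" by auto
  qed
  show ?thesis using s1 s2 s3 by blast
qed


end
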